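(* Let $m\ge2$, $\theta\in(0,1]$, and let $\hat P$ be the expected normalized profile. Then Plurality elects candidate $1$ in $\hat P$; Plurality is CM (indeed unison-manipulable) in $\hat P$ if $\theta<\frac{m-2}{3m-2}$, and Plurality is not CM in any continuous profile of some neighborhood of $\hat P$ if $\theta>\frac{m-2}{3m-2}$.
   Context: A ranking is a strict total order on $\{1,\dots,m\}$. A continuous profile consists of the candidate set, a total weight $w(P)>0$ and weights $w(p,P)\ge 0$ for each ranking $p$ summing to $w(P)$; profiles are identified with weight vectors in $\mathbb R^{m!}$ (neighborhoods are taken among continuous profiles of total weight $1$ in this topology). Plurality: $s_{\mathrm{Plu}}(c,P)$ is the total weight of rankings placing $c$ first; the winner has the highest score, ties broken by an arbitrary fixed rule. CM (continuous): a rule $f$ is CM in $P$ if there is a continuous profile $Q$ with the same candidates and total weight, $f(Q)\ne f(P)$, and every ranking $p$ with $w(p,Q)<w(p,P)$ prefers $f(Q)$ to $f(P)$. UM: $f$ is unison-manipulable in $P$ if there are a candidate $c\ne f(P)$ and a ranking $q$ such that moving all weight of the rankings preferring $c$ to $f(P)$ onto $q$ yields a profile where $c$ wins. Expected normalized profile $\hat P$ (for parameters $m$, $\theta$): total weight $1$, weight $\theta+\frac{1-\theta}{m!}$ on $1\succ 2\succ\cdots\succ m$ and $\frac{1-\theta}{m!}$ on each other ranking. *)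

theory Defs
  imports Complex_Main "HOL-Combinatorics.Multiset_Permutations"
begin

text \<open>A ranking is a list enumerating {1..m} without repetition;
  its head is the top candidate.\<close>

definition rankings :: "nat \<Rightarrow> nat list set" where
  "rankings m = permutations_of_set {1..m}"

definition prefers :: "nat list \<Rightarrow> nat \<Rightarrow> nat \<Rightarrow> bool" where
  "prefers p a b \<longleftrightarrow> (\<exists>i j. i < j \<and> j < length p \<and> p ! i = a \<and> p ! j = b)"

definition total_weight :: "nat \<Rightarrow> (nat list \<Rightarrow> real) \<Rightarrow> real" where
  "total_weight m w = (\<Sum>p\<in>rankings m. w p)"

definition is_profile :: "nat \<Rightarrow> (nat list \<Rightarrow> real) \<Rightarrow> bool" where
  "is_profile m w \<longleftrightarrow> (\<forall>p\<in>rankings m. 0 \<le> w p) \<and> (\<forall>p. p \<notin> rankings m \<longrightarrow> w p = 0)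
     \<and> 0 < total_weight m w"

definition plu_score :: "nat \<Rightarrow> (nat list \<Rightarrow> real) \<Rightarrow> nat \<Rightarrow> real" where
  "plu_score m w c = (\<Sum>p\<in>{p\<in>rankings m. hd p = c}. w p)"

definition plu_winners :: "nat \<Rightarrow> (nat list \<Rightarrow> real) \<Rightarrow> nat set" where
  "plu_winners m w = {c\<in>{1..m}. \<forall>d\<in>{1..m}. plu_score m w d \<le> plu_score m w c}"

definition tie_rule :: "nat \<Rightarrow> (nat set \<Rightarrow> nat) \<Rightarrow> bool" where
  "tie_rule m tb \<longleftrightarrow> (\<forall>S. S \<noteq> {} \<longrightarrow> S \<subseteq> {1..m} \<longrightarrow> tb S \<in> S)"

definition plurality :: "nat \<Rightarrow> (nat set \<Rightarrow> nat) \<Rightarrow> (nat list \<Rightarrow> real) \<Rightarrow> nat" where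
  "plurality m tb w = tb (plu_winners m w)"

definition CM :: "nat \<Rightarrow> ((nat list \<Rightarrow> real) \<Rightarrow> nat) \<Rightarrow> (nat list \<Rightarrow> real) \<Rightarrow> bool" where
  "CM m f P \<longleftrightarrow> (\<exists>Q. is_profile m Q \<and> total_weight m Q = total_weight m P \<and> f Q \<noteq> f P \<and>
      (\<forall>p\<in>rankings m. Q p < P p \<longrightarrow> prefers p (f Q) (f P)))"

definition unison_move :: "nat \<Rightarrow> ((nat list \<Rightarrow> real) \<Rightarrow> nat) \<Rightarrow> (nat list \<Rightarrow> real) \<Rightarrow> nat \<Rightarrow> nat list
    \<Rightarrow> (nat list \<Rightarrow> real)" where
  "unison_move m f P c q = (\<lambda>p. (if prefers p c (f P) then 0 else P p)
      + (if p = q then (\<Sum>p'\<in>{p'\<in>rankings m. prefers p' c (f P)}. P p') else 0))"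

definition UM :: "nat \<Rightarrow> ((nat list \<Rightarrow> real) \<Rightarrow> nat) \<Rightarrow> (nat list \<Rightarrow> real) \<Rightarrow> bool" where
  "UM m f P \<longleftrightarrow> (\<exists>c q. c \<in> {1..m} \<and> c \<noteq> f P \<and> q \<in> rankings m \<and> f (unison_move m f P c q) = c)"

definition expected_profile :: "nat \<Rightarrow> real \<Rightarrow> nat list \<Rightarrow> real" where
  "expected_profile m \<theta> p = (if p \<in> rankings m then
      (if p = [1..<m+1] then \<theta> + (1 - \<theta>) / fact m else (1 - \<theta>) / fact m) else 0)"

end

theory Submission
  imports Defs
begin


lemma rank_D: "p \<in> rankings m \<Longrightarrow> distinct p \<and> set p = {1..m}"
  by (simp add: rankings_def permutations_of_set_def)

lemma finite_R[simp]: "finite (rankings m)"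
  by (simp add: rankings_def)

lemma card_R: "card (rankings m) = fact m"
  by (simp add: rankings_def)

lemma pref_asym: "distinct p \<Longrightarrow> prefers p a b \<Longrightarrow> \<not> prefers p b a"
proof
  assume d: "distinct p" and "prefers p a b" "prefers p b a"
  then obtain i j i' j' where h: "i<j" "j<length p" "p!i=a" "p!j=b" "i'<j'" "j'<length p" "p!i'=b" "p!j'=a"
    unfolding prefers_def by blast
  have "i = j'" using d h nth_eq_iff_index_eq[of p i j'] by simp
  moreover have "j = i'" using d h nth_eq_iff_index_eq[of p j i'] by simp
  ultimately show False using h by simp
qed

lemma pref_total: "a \<noteq> b \<Longrightarrow> a \<in> set p \<Longrightarrow> b \<in> set p \<Longrightarrow> prefers p a b \<or> prefers p b a"
proof -
  assume ab: "a \<noteq> b" "a \<in> set p" "b \<in> set p"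
  then obtain i j where h: "i < length p" "p ! i = a" "j < length p" "p ! j = b"
    by (metis in_set_conv_nth)
  have "i \<noteq> j" using h ab by auto
  then have "i < j \<or> j < i" by arith
  then show ?thesis unfolding prefers_def using h by blast
qed

lemma pref_hd: "distinct p \<Longrightarrow> \<not> prefers p x (hd p)"
proof
  assume d: "distinct p" and "prefers p x (hd p)"
  then obtain i j where h: "i<j" "j<length p" "p!i=x" "p!j=hd p"
    unfolding prefers_def by blast
  then have ne: "p \<noteq> []" by auto
  then have hd0: "p!0 = hd p" by (simp add: hd_conv_nth)
  have e: "p!j = p!0" using h(4) hd0 by (rule trans[OF _ sym])
  have l0: "0 < length p" using ne by simp
  have "j = 0" using nth_eq_iff_index_eq[OF d h(2) l0] e by blast
  then show False using h by simp
qed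

lemma pref_hd2: "distinct p \<Longrightarrow> p \<noteq> [] \<Longrightarrow> b \<in> set p \<Longrightarrow> b \<noteq> hd p \<Longrightarrow> prefers p (hd p) b"
proof -
  assume d: "distinct p" and ne: "p \<noteq> []" and b: "b \<in> set p" "b \<noteq> hd p"
  have "hd p \<in> set p" using ne by (rule hd_in_set)
  then have "prefers p (hd p) b \<or> prefers p b (hd p)" using pref_total[of "hd p" b p] b by blast
  then show ?thesis using pref_hd[OF d, of b] by blast
qed

lemma tr1: "Transposition.transpose a b x = a \<longleftrightarrow> x = b"
  by (auto simp: Transposition.transpose_def)
lemma tr2: "Transposition.transpose a b x = b \<longleftrightarrow> x = a"
  by (auto simp: Transposition.transpose_def)

lemma pref_map_transpose:
  "prefers (map (Transposition.transpose a b) p) a b \<longleftrightarrow> prefers p b a"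
proof -
  have "\<And>i j. i<j \<and> j<length p \<Longrightarrow> ((map (Transposition.transpose a b) p)!i = a \<and> (map (Transposition.transpose a b) p)!j = b \<longleftrightarrow> p!i = b \<and> p!j = a)"
    by (simp add: tr1 tr2)
  then show ?thesis unfolding prefers_def length_map by blast
qed

lemma card_pref_le:
  assumes "a \<noteq> b" "a \<in> {1..m}" "b \<in> {1..m}"
  shows "card {p\<in>rankings m. prefers p a b} \<le> card {p\<in>rankings m. prefers p b a}"
proof (rule card_inj_on_le[where f = "map (Transposition.transpose b a)"])
  show "inj_on (map (Transposition.transpose b a)) {p \<in> rankings m. prefers p a b}"
    by (meson inj_mapI inj_on_subset inj_transpose subset_UNIV)
  have perm: "Transposition.transpose b a permutes {1..m}"
    using assms by (simp add: permutes_swap_id)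
  have "map (Transposition.transpose b a) p \<in> rankings m" if "p \<in> rankings m" for p
    using permutations_of_set_image_permutes[OF perm] that unfolding rankings_def by blast
  then show "map (Transposition.transpose b a) ` {p \<in> rankings m. prefers p a b}
      \<subseteq> {p \<in> rankings m. prefers p b a}"
    by (auto simp: pref_map_transpose)
qed simp

lemma card_pref:
  assumes "a \<noteq> b" "a \<in> {1..m}" "b \<in> {1..m}"
  shows "2 * card {p\<in>rankings m. prefers p a b} = fact m"
proof -
  let ?X = "{p\<in>rankings m. prefers p a b}" and ?Y = "{p\<in>rankings m. prefers p b a}"
  have eq: "card ?X = card ?Y" using card_pref_le[OF assms] card_pref_le[of b a m] assms
    by (simp add: le_antisym)
  have un: "?X \<union> ?Y = rankings m"
  proof
    show "rankings m \<subseteq> ?X \<union> ?Y"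
    proof
      fix x assume x: "x \<in> rankings m"
      then have "a \<in> set x" "b \<in> set x" using rank_D assms by auto
      then show "x \<in> ?X \<union> ?Y" using pref_total[of a b x] assms x by auto
    qed
  qed auto
  have dis: "?X \<inter> ?Y = {}" using pref_asym rank_D by blast
  have "card (rankings m) = card ?X + card ?Y"
    by (metis (no_types, lifting) card_Un_disjoint dis finite_R finite_Un un)
  then show ?thesis using eq card_R by simp
qed

lemma card_hd:
  assumes "x \<in> {1..m}"
  shows "card {p\<in>rankings m. hd p = x} = fact (m - 1)"
proof -
  have "{p\<in>rankings m. hd p = x} = (\<lambda>xs. x # xs) ` permutations_of_set ({1..m} - {x})"
  proof (rule set_eqI, rule iffI)
    fix p assume p: "p \<in> {p\<in>rankings m. hd p = x}"
    then have d: "distinct p" "set p = {1..m}" "hd p = x" using rank_D by auto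
    then have "p \<noteq> []" using assms by auto
    then have "p = x # tl p" using d by (metis list.collapse)
    moreover have "tl p \<in> permutations_of_set ({1..m} - {x})"
      using d \<open>p = x # tl p\<close> by (intro permutations_of_setI) (metis distinct.simps(2) list.set(2) Diff_insert_absorb,
          metis distinct.simps(2))
    ultimately show "p \<in> (\<lambda>xs. x # xs) ` permutations_of_set ({1..m} - {x})" by blast
  next
    fix p assume "p \<in> (\<lambda>xs. x # xs) ` permutations_of_set ({1..m} - {x})"
    then obtain xs where p: "p = x # xs" and xs: "set xs = {1..m} - {x}" "distinct xs"
      unfolding permutations_of_set_def by blast
    have "set p = insert x (set xs)" using p by simp
    then have "set p = {1..m}" using xs(1) assms by (metis insert_Diff)
    moreover have "distinct p" using p xs by simp
    ultimately have "p \<in> rankings m" unfolding rankings_def by (rule permutations_of_setI)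
    then show "p \<in> {p\<in>rankings m. hd p = x}" using p by simp
  qed
  moreover have "inj_on (\<lambda>xs. x # xs) (permutations_of_set ({1..m} - {x}))"
    by (rule inj_onI) simp
  ultimately have "card {p\<in>rankings m. hd p = x} = card (permutations_of_set ({1..m} - {x}))"
    using card_image by metis
  moreover have "card ({1..m} - {x}) = m - 1" using assms by simp
  ultimately show ?thesis by simp
qed

lemma id_rank: "[1..<m+1] \<in> rankings m"
  by (auto simp: rankings_def permutations_of_set_def)

lemma sum_exp:
  assumes "S \<subseteq> rankings m"
  shows "(\<Sum>p\<in>S. expected_profile m \<theta> p) = (1-\<theta>)/fact m * card S + (if [1..<m+1] \<in> S then \<theta> else 0)"
proof -
  have fin: "finite S" using finite_subset[OF assms finite_R] .
  have "(\<Sum>p\<in>S. expected_profile m \<theta> p) = (\<Sum>p\<in>S. (1-\<theta>)/fact m + (if p = [1..<m+1] then \<theta> else 0))"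
    using assms by (intro sum.cong) (auto simp: expected_profile_def)
  also have "\<dots> = (1-\<theta>)/fact m * card S + (if [1..<m+1] \<in> S then \<theta> else 0)"
    using fin by (simp add: sum.distrib)
  finally show ?thesis .
qed

lemma plu_win:
  assumes "tie_rule m tb" "c \<in> {1..m}" "\<And>d. d \<in> {1..m} \<Longrightarrow> d \<noteq> c \<Longrightarrow> plu_score m w d < plu_score m w c"
  shows "plurality m tb w = c"
proof -
  have "plu_winners m w = {c}"
  proof (rule set_eqI)
    fix x show "x \<in> plu_winners m w \<longleftrightarrow> x \<in> {c}"
    proof
      assume x: "x \<in> plu_winners m w"
      then have x1: "x \<in> {1..m}" and x2: "\<forall>d\<in>{1..m}. plu_score m w d \<le> plu_score m w x"
        unfolding plu_winners_def by auto
      show "x \<in> {c}"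
      proof (rule ccontr)
        assume "x \<notin> {c}"
        then have "plu_score m w x < plu_score m w c" using assms(3) x1 by simp
        moreover have "plu_score m w c \<le> plu_score m w x" using x2 assms(2) by blast
        ultimately show False by simp
      qed
    next
      assume "x \<in> {c}"
      then have xc: "x = c" by simp
      have "\<forall>d\<in>{1..m}. plu_score m w d \<le> plu_score m w c"
      proof
        fix d assume "d \<in> {1..m}"
        then show "plu_score m w d \<le> plu_score m w c" using assms(3)[of d]
          by (cases "d = c") auto
      qed
      then show "x \<in> plu_winners m w" unfolding plu_winners_def using xc assms(2) by blast
    qed
  qed
  then show ?thesis using assms(1) unfolding plurality_def tie_rule_def using assms(2) by auto
qed

lemma plu_in:
  assumes "tie_rule m tb" "m \<ge> 1"
  shows "plurality m tb w \<in> plu_winners m w"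
proof -
  let ?M = "Max (plu_score m w ` {1..m})"
  have "?M \<in> plu_score m w ` {1..m}" using assms by (intro Max_in) auto
  then obtain c where c: "c \<in> {1..m}" "plu_score m w c = ?M" by auto
  have "c \<in> plu_winners m w" unfolding plu_winners_def using c by auto
  then have "plu_winners m w \<noteq> {}" by auto
  moreover have "plu_winners m w \<subseteq> {1..m}" unfolding plu_winners_def by auto
  ultimately show ?thesis using assms(1) unfolding tie_rule_def plurality_def by auto
qed



theorem mainTheorem5:
  fixes m :: nat and \<theta> :: real and tb :: "nat set \<Rightarrow> nat"
  assumes "m \<ge> 2" and "0 < \<theta>" and "\<theta> \<le> 1" and "tie_rule m tb"
  shows "plurality m tb (expected_profile m \<theta>) = 1
    \<and> (\<theta> < (real m - 2) / (3 * real m - 2) \<longrightarrow>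
         CM m (plurality m tb) (expected_profile m \<theta>) \<and> UM m (plurality m tb) (expected_profile m \<theta>))
    \<and> (\<theta> > (real m - 2) / (3 * real m - 2) \<longrightarrow>
         (\<exists>\<epsilon>>0. \<forall>Q. is_profile m Q \<and> total_weight m Q = 1
             \<and> (\<forall>p\<in>rankings m. \<bar>Q p - expected_profile m \<theta> p\<bar> < \<epsilon>)
             \<longrightarrow> \<not> CM m (plurality m tb) Q))"
proof -
  note m2 = assms(1) and th0 = assms(2) and th1 = assms(3) and tie = assms(4)
  define P where "P = expected_profile m \<theta>"
  define R where "R = rankings m"
  define f where "f = plurality m tb"
  define idl where "idl = [1..<m+1]"
  define F :: real where "F = fact m"
  have m1: "m \<ge> 1" using m2 by simp
  have Fpos: "F > 0" unfolding F_def by simp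
  have Fm: "F = real m * fact (m - 1)" unfolding F_def using m1 by (simp add: fact_reduce)
  have finR: "finite R" unfolding R_def by simp
  have Pnn: "\<And>p. P p \<ge> 0" unfolding P_def expected_profile_def using th0 th1 Fpos F_def
    by (auto intro!: add_nonneg_nonneg divide_nonneg_pos)
  have Pout: "\<And>p. p \<notin> R \<Longrightarrow> P p = 0" unfolding P_def R_def expected_profile_def by simp
  have idR: "idl \<in> R" unfolding idl_def R_def by (rule id_rank)
  have hdid: "hd idl = 1" unfolding idl_def by (rule hd_upt) (use m1 in simp)
  have sumP: "\<And>S. S \<subseteq> R \<Longrightarrow> sum P S = (1-\<theta>)/F * card S + (if idl \<in> S then \<theta> else 0)"
    unfolding P_def F_def idl_def R_def by (rule sum_exp)
  have score_def': "\<And>w d. plu_score m w d = sum w {p\<in>R. hd p = d}"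
    unfolding plu_score_def R_def by simp
  have cH: "\<And>d. d \<in> {1..m} \<Longrightarrow> (1-\<theta>)/F * card {p\<in>R. hd p = d} = (1-\<theta>)/m"
  proof -
    fix d :: nat assume d: "d \<in> {1..m}"
    have "card {p\<in>R. hd p = d} = fact (m-1)" unfolding R_def using d by (rule card_hd)
    then have "(1-\<theta>)/F * card {p\<in>R. hd p = d} = (1-\<theta>)/F * fact (m-1)" by simp
    also have "\<dots> = (1-\<theta>)/m" using Fm m1 Fpos by (simp add: field_simps)
    finally show "(1-\<theta>)/F * card {p\<in>R. hd p = d} = (1-\<theta>)/m" .
  qed
  have sP1: "plu_score m P 1 = \<theta> + (1-\<theta>)/m"
  proof -
    have "idl \<in> {p\<in>R. hd p = 1}" using idR hdid by simp
    then show ?thesis using sumP[of "{p\<in>R. hd p = 1}"] cH[of 1] m1 score_def' by simp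
  qed
  have sPd: "\<And>d. d \<in> {1..m} \<Longrightarrow> d \<noteq> 1 \<Longrightarrow> plu_score m P d = (1-\<theta>)/m"
  proof -
    fix d :: nat assume d: "d \<in> {1..m}" "d \<noteq> 1"
    have "idl \<notin> {p\<in>R. hd p = d}" using hdid d by auto
    then have "sum P {p\<in>R. hd p = d} = (1-\<theta>)/F * card {p\<in>R. hd p = d}"
      using sumP[of "{p\<in>R. hd p = d}"] unfolding if_not_P[OF \<open>idl \<notin> {p\<in>R. hd p = d}\<close>] by simp
    then show "plu_score m P d = (1-\<theta>)/m" using cH[OF d(1)] score_def' by simp
  qed
  have cA: "\<And>a b. a \<noteq> b \<Longrightarrow> a \<in> {1..m} \<Longrightarrow> b \<in> {1..m} \<Longrightarrow> (1-\<theta>)/F * card {p\<in>R. prefers p a b} = (1-\<theta>)/2"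
  proof -
    fix a b :: nat assume ab: "a \<noteq> b" "a \<in> {1..m}" "b \<in> {1..m}"
    have "2 * card {p\<in>R. prefers p a b} = fact m" unfolding R_def using ab by (rule card_pref)
    then have "real (2 * card {p\<in>R. prefers p a b}) = F" unfolding F_def by (metis of_nat_fact)
    then have e: "real (card {p\<in>R. prefers p a b}) * 2 = F" by simp
    have "(1-\<theta>)/F * card {p\<in>R. prefers p a b} = ((1-\<theta>) * (real (card {p\<in>R. prefers p a b}) * 2)) / (2*F)"
      using Fpos by (simp add: field_simps)
    also have "\<dots> = (1-\<theta>) * F / (2*F)" unfolding e ..
    also have "\<dots> = (1-\<theta>)/2" using Fpos by simp
    finally show "(1-\<theta>)/F * card {p\<in>R. prefers p a b} = (1-\<theta>)/2" .
  qed
  have pid: "\<And>c. c \<in> {1..m} \<Longrightarrow> c \<noteq> 1 \<Longrightarrow> prefers idl 1 c"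
  proof -
    fix c :: nat assume c: "c \<in> {1..m}" "c \<noteq> 1"
    have "0 < c - 1" "c - 1 < length idl" "idl ! 0 = 1" "idl ! (c-1) = c" using c unfolding idl_def by (auto simp del: upt_Suc)
    then show "prefers idl 1 c" unfolding prefers_def by blast
  qed
  have did: "distinct idl" unfolding idl_def by simp
  have sA1: "\<And>c. c \<in> {1..m} \<Longrightarrow> c \<noteq> 1 \<Longrightarrow> sum P {p\<in>R. prefers p 1 c} = \<theta> + (1-\<theta>)/2"
  proof -
    fix c :: nat assume c: "c \<in> {1..m}" "c \<noteq> 1"
    have "idl \<in> {p\<in>R. prefers p 1 c}" using idR pid[OF c] by simp
    then show "sum P {p\<in>R. prefers p 1 c} = \<theta> + (1-\<theta>)/2"
      using sumP[of "{p\<in>R. prefers p 1 c}"] cA[of 1 c] c m1 by simp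
  qed
  have sA2: "\<And>c. c \<in> {1..m} \<Longrightarrow> c \<noteq> 1 \<Longrightarrow> sum P {p\<in>R. prefers p c 1} = (1-\<theta>)/2"
  proof -
    fix c :: nat assume c: "c \<in> {1..m}" "c \<noteq> 1"
    have "idl \<notin> {p\<in>R. prefers p c 1}" using pref_asym[OF did pid[OF c]] by simp
    then have "sum P {p\<in>R. prefers p c 1} = (1-\<theta>)/F * card {p\<in>R. prefers p c 1}"
      using sumP[of "{p\<in>R. prefers p c 1}"] unfolding if_not_P[OF \<open>idl \<notin> {p\<in>R. prefers p c 1}\<close>] by simp
    then show "sum P {p\<in>R. prefers p c 1} = (1-\<theta>)/2"
      using cA[of c 1] c m1 by simp
  qed
  have twP: "total_weight m P = 1"
  proof -
    have "total_weight m P = sum P R" unfolding total_weight_def R_def by simp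
    also have "\<dots> = (1-\<theta>)/F * card R + \<theta>" using sumP[of R] idR by simp
    also have "card R = fact m" unfolding R_def by (rule card_R)
    finally show ?thesis using Fpos unfolding F_def by simp
  qed
  have fP: "f P = 1"
    unfolding f_def
  proof (rule plu_win[OF tie])
    show "1 \<in> {1..m}" using m1 by simp
    fix d assume "d \<in> {1..m}" "d \<noteq> 1"
    then show "plu_score m P d < plu_score m P 1" using sP1 sPd th0 by simp
  qed
  define D where "D = \<theta> + (1-\<theta>)/m - (1-\<theta>)/2"
  have mpos: "real m > 0" using m1 by simp
  have Deq: "D * (2 * real m) = \<theta> * (3 * real m - 2) - (real m - 2)"
    unfolding D_def using mpos by (simp add: field_simps)
  have den: "3 * real m - 2 > 0" using m2 by simp
  have part1: "plurality m tb (expected_profile m \<theta>) = 1" using fP unfolding f_def P_def .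
  have part2: "\<theta> < (real m - 2) / (3 * real m - 2) \<longrightarrow>
         CM m f P \<and> UM m f P"
  proof
    assume lt: "\<theta> < (real m - 2) / (3 * real m - 2)"
    then have "\<theta> * (3 * real m - 2) < real m - 2" using den by (simp add: pos_less_divide_eq)
    then have "D * (2 * real m) < 0" using Deq by simp
    then have Dneg: "D < 0" using mpos by (simp add: mult_less_0_iff)
    have m3: "m \<ge> 3"
    proof (rule ccontr)
      assume "\<not> m \<ge> 3" then have "m = 2" using m2 by simp
      then show False using lt th0 by simp
    qed
    define q where "q = 2 # 1 # [3..<m+1]"
    have setq: "set q = {1..m}" unfolding q_def using m3 by auto
    have qR: "q \<in> R" unfolding R_def rankings_def using setq by (intro permutations_of_setI) (auto simp: q_def)
    have hdq: "hd q = 2" unfolding q_def by simp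
    have pq: "prefers q 2 1"
    proof -
      have "(0::nat) < 1" "1 < length q" "q ! 0 = 2" "q ! 1 = 1" unfolding q_def using m3 by auto
      then show ?thesis unfolding prefers_def by blast
    qed
    define S where "S = sum P {p\<in>R. prefers p 2 1}"
    have S: "S = (1-\<theta>)/2" unfolding S_def using sA2[of 2] m3 by simp
    have Snn: "S \<ge> 0" using S th1 by simp
    define Q where "Q = unison_move m f P 2 q"
    have Qdef: "\<And>p. Q p = (if prefers p 2 1 then 0 else P p) + (if p = q then S else 0)"
      unfolding Q_def unison_move_def fP S_def R_def by simp
    have Qnn: "\<And>p. Q p \<ge> 0" using Qdef Pnn Snn by simp
    have Qle: "\<And>p. p \<noteq> q \<Longrightarrow> Q p \<le> P p" using Qdef Pnn by simp
    have Qq: "Q q = S" using Qdef pq by simp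
    have sQ2: "plu_score m Q 2 \<ge> S"
    proof -
      have "Q q \<le> sum Q {p\<in>R. hd p = 2}"
        by (rule member_le_sum) (use qR hdq Qnn finR in auto)
      then show ?thesis using Qq score_def' by simp
    qed
    have sQd: "\<And>d. d \<noteq> 2 \<Longrightarrow> plu_score m Q d \<le> plu_score m P d"
    proof -
      fix d :: nat assume d: "d \<noteq> 2"
      have "sum Q {p\<in>R. hd p = d} \<le> sum P {p\<in>R. hd p = d}"
      proof (rule sum_mono)
        fix p assume "p \<in> {p\<in>R. hd p = d}"
        then have "p \<noteq> q" using hdq d by auto
        then show "Q p \<le> P p" by (rule Qle)
      qed
      then show "plu_score m Q d \<le> plu_score m P d" using score_def' by simp
    qed
    have fQ: "f Q = 2"
      unfolding f_def
    proof (rule plu_win[OF tie])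
      show "2 \<in> {1..m}" using m3 by simp
      fix d assume d: "d \<in> {1..m}" "d \<noteq> 2"
      have "plu_score m P d \<le> \<theta> + (1-\<theta>)/m"
        using sP1 sPd[OF d(1)] th0 by (cases "d = 1") auto
      also have "\<dots> < S" using Dneg S unfolding D_def by linarith
      finally show "plu_score m Q d < plu_score m Q 2" using sQd[OF d(2)] sQ2 by simp
    qed
    have twQ: "total_weight m Q = 1"
    proof -
      have "total_weight m Q = sum Q R" unfolding total_weight_def R_def by simp
      also have "\<dots> = (\<Sum>p\<in>R. P p - (if prefers p 2 1 then P p else 0)) + (\<Sum>p\<in>R. if p = q then S else 0)"
      proof -
        have "\<And>p. Q p = (P p - (if prefers p 2 1 then P p else 0)) + (if p = q then S else 0)"
          using Qdef by simp
        then show ?thesis by (simp add: sum.distrib)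
      qed
      also have "(\<Sum>p\<in>R. if p = q then S else 0) = S" using finR qR by simp
      also have "(\<Sum>p\<in>R. P p - (if prefers p 2 1 then P p else 0)) = sum P R - S"
        unfolding S_def sum.inter_filter[OF finR] by (simp add: sum_subtractf)
      also have "sum P R = 1" using twP unfolding total_weight_def R_def by simp
      finally show ?thesis by simp
    qed
    have profQ: "is_profile m Q"
      unfolding is_profile_def
    proof (intro conjI)
      show "\<forall>p\<in>rankings m. 0 \<le> Q p" using Qnn by simp
      show "\<forall>p. p \<notin> rankings m \<longrightarrow> Q p = 0" using Qdef Pout qR R_def by auto
      show "0 < total_weight m Q" using twQ by simp
    qed
    have dec: "\<forall>p\<in>rankings m. Q p < P p \<longrightarrow> prefers p (f Q) (f P)"
    proof (intro ballI impI)
      fix p assume "p \<in> rankings m" "Q p < P p"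
      then have "prefers p 2 1" using Qdef[of p] Snn by (cases "prefers p 2 1"; cases "p = q") auto
      then show "prefers p (f Q) (f P)" using fQ fP by simp
    qed
    have "CM m f P" unfolding CM_def
      using profQ twQ twP fQ fP dec by (intro exI[of _ Q]) auto
    moreover have "UM m f P" unfolding UM_def
      using fQ fP m3 qR unfolding Q_def R_def by (intro exI[of _ 2] exI[of _ q]) auto
    ultimately show "CM m f P \<and> UM m f P" by simp
  qed
  have part3: "\<theta> > (real m - 2) / (3 * real m - 2) \<longrightarrow>
         (\<exists>\<epsilon>>0. \<forall>Q. is_profile m Q \<and> total_weight m Q = 1
             \<and> (\<forall>p\<in>rankings m. \<bar>Q p - P p\<bar> < \<epsilon>)
             \<longrightarrow> \<not> CM m f Q)"
  proof
    assume gt: "\<theta> > (real m - 2) / (3 * real m - 2)"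
    then have "\<theta> * (3 * real m - 2) > real m - 2" using den by (simp add: pos_divide_less_eq)
    then have "D * (2 * real m) > 0" using Deq by simp
    then have Dpos: "D > 0" using mpos by (simp add: zero_less_mult_iff)
    have "(1-\<theta>)/m \<le> (1-\<theta>)/2"
      using th1 m2 by (intro divide_left_mono) auto
    then have Dle: "D \<le> \<theta>" unfolding D_def by simp
    define \<epsilon> where "\<epsilon> = D / (3 * F)"
    have epos: "\<epsilon> > 0" unfolding \<epsilon>_def using Dpos Fpos by simp
    have FE: "F * \<epsilon> = D / 3" unfolding \<epsilon>_def using Fpos by simp
    show "\<exists>\<epsilon>>0. \<forall>Q. is_profile m Q \<and> total_weight m Q = 1
             \<and> (\<forall>p\<in>rankings m. \<bar>Q p - P p\<bar> < \<epsilon>) \<longrightarrow> \<not> CM m f Q"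
    proof (intro exI[of _ \<epsilon>] conjI allI impI)
      show "\<epsilon> > 0" by (rule epos)
      fix Q assume asm: "is_profile m Q \<and> total_weight m Q = 1 \<and> (\<forall>p\<in>rankings m. \<bar>Q p - P p\<bar> < \<epsilon>)"
      then have close: "\<And>p. p \<in> R \<Longrightarrow> \<bar>Q p - P p\<bar> < \<epsilon>" and twQ: "total_weight m Q = 1"
        unfolding R_def by auto
      have cs: "\<And>S. S \<subseteq> R \<Longrightarrow> \<bar>sum Q S - sum P S\<bar> \<le> D / 3"
      proof -
        fix S assume SR: "S \<subseteq> R"
        have finS: "finite S" using finite_subset[OF SR finR] .
        have "\<bar>sum Q S - sum P S\<bar> = \<bar>\<Sum>p\<in>S. Q p - P p\<bar>" by (simp add: sum_subtractf)
        also have "\<dots> \<le> (\<Sum>p\<in>S. \<bar>Q p - P p\<bar>)" by (rule sum_abs)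
        also have "\<dots> \<le> (\<Sum>p\<in>S. \<epsilon>)" by (rule sum_mono) (use close SR in force)
        also have "\<dots> = card S * \<epsilon>" by simp
        also have "card S \<le> card R" using card_mono[OF finR SR] .
        then have "real (card S) * \<epsilon> \<le> real (card R) * \<epsilon>" using epos by (intro mult_right_mono) auto
        also have "real (card R) = F" unfolding R_def F_def card_R by simp
        finally show "\<bar>sum Q S - sum P S\<bar> \<le> D / 3" using FE by simp
      qed
      have HR: "\<And>d. {p\<in>R. hd p = d} \<subseteq> R" by auto
      have fQ: "f Q = 1"
        unfolding f_def
      proof (rule plu_win[OF tie])
        show "1 \<in> {1..m}" using m1 by simp
        fix d assume d: "d \<in> {1..m}" "d \<noteq> 1"
        have a1: "\<bar>plu_score m Q d - plu_score m P d\<bar> \<le> D/3"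
          using cs[OF HR[of d]] score_def' by simp
        have a2: "\<bar>plu_score m Q 1 - plu_score m P 1\<bar> \<le> D/3"
          using cs[OF HR[of 1]] score_def' by simp
        show "plu_score m Q d < plu_score m Q 1"
          using abs_le_D1[OF a1] abs_le_D2[OF a2] sPd[OF d] sP1 Dle Dpos by linarith
      qed
      show "\<not> CM m f Q"
      proof
        assume "CM m f Q"
        then obtain Q' where prof': "is_profile m Q'" and tw': "total_weight m Q' = total_weight m Q"
          and ne: "f Q' \<noteq> f Q" and dec: "\<forall>p\<in>rankings m. Q' p < Q p \<longrightarrow> prefers p (f Q') (f Q)"
          unfolding CM_def by blast
        define c where "c = f Q'"
        have c1: "c \<noteq> 1" using ne fQ c_def by simp
        have cw: "c \<in> plu_winners m Q'" unfolding c_def f_def using tie m1 by (rule plu_in)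
        then have cm: "c \<in> {1..m}" and cge: "plu_score m Q' 1 \<le> plu_score m Q' c"
          unfolding plu_winners_def using m1 by auto
        have dec': "\<And>p. p \<in> R \<Longrightarrow> Q' p < Q p \<Longrightarrow> prefers p c 1"
          using dec fQ unfolding c_def R_def by auto
        have Q'nn: "\<And>p. p \<in> R \<Longrightarrow> Q' p \<ge> 0" using prof' unfolding is_profile_def R_def by auto
        have tw1: "sum Q' R = 1" using tw' twQ unfolding total_weight_def R_def by simp
        define A where "A = {p\<in>R. prefers p 1 c}"
        define H1 where "H1 = {p\<in>R. hd p = 1}"
        define Hc where "Hc = {p\<in>R. hd p = c}"
        have "sum Q H1 \<le> sum Q' H1"
        proof (rule sum_mono)
          fix p assume p: "p \<in> H1"
          then have pR: "p \<in> R" and hp: "hd p = 1" unfolding H1_def by auto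
          have dp: "distinct p" using pR rank_D unfolding R_def by blast
          show "Q p \<le> Q' p"
          proof (rule ccontr)
            assume "\<not> Q p \<le> Q' p"
            then have "prefers p c 1" using dec' pR by simp
            then show False using pref_hd[OF dp, of c] hp by simp
          qed
        qed
        moreover have "sum Q A \<le> sum Q' A"
        proof (rule sum_mono)
          fix p assume p: "p \<in> A"
          then have pR: "p \<in> R" and hp: "prefers p 1 c" unfolding A_def by auto
          have dp: "distinct p" using pR rank_D unfolding R_def by blast
          show "Q p \<le> Q' p"
          proof (rule ccontr)
            assume "\<not> Q p \<le> Q' p"
            then have "prefers p c 1" using dec' pR by simp
            then show False using pref_asym[OF dp hp] by simp
          qed
        qed
        moreover have "sum Q' Hc + sum Q' A \<le> 1"
        proof -
          have dis: "Hc \<inter> A = {}"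
          proof (rule ccontr)
            assume "Hc \<inter> A \<noteq> {}"
            then obtain p where p: "p \<in> R" "hd p = c" "prefers p 1 c" unfolding Hc_def A_def by auto
            have "distinct p" using p(1) rank_D unfolding R_def by blast
            then show False using pref_hd[of p 1] p by simp
          qed
          have fins: "finite Hc" "finite A" unfolding Hc_def A_def using finR by auto
          have "sum Q' Hc + sum Q' A = sum Q' (Hc \<union> A)" by (rule sum.union_disjoint[OF fins dis, symmetric])
          also have "\<dots> \<le> sum Q' R"
            by (rule sum_mono2[OF finR]) (use Q'nn in \<open>auto simp: Hc_def A_def\<close>)
          finally show ?thesis using tw1 by simp
        qed
        moreover have "sum P A = \<theta> + (1-\<theta>)/2" unfolding A_def using sA1[OF cm c1] .
        moreover have "sum P H1 = \<theta> + (1-\<theta>)/m" unfolding H1_def using sP1 score_def' by simp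
        moreover have "sum P A - D/3 \<le> sum Q A"
        proof -
          have "\<bar>sum Q A - sum P A\<bar> \<le> D/3" using cs unfolding A_def by auto
          then show ?thesis using abs_le_D2 by linarith
        qed
        moreover have "sum P H1 - D/3 \<le> sum Q H1"
        proof -
          have "\<bar>sum Q H1 - sum P H1\<bar> \<le> D/3" using cs unfolding H1_def by auto
          then show ?thesis using abs_le_D2 by linarith
        qed
        moreover have "plu_score m Q' 1 = sum Q' H1" unfolding H1_def using score_def' by simp
        moreover have "plu_score m Q' c = sum Q' Hc" unfolding Hc_def using score_def' by simp
        ultimately have fin: "sum Q H1 \<le> sum Q' H1" "sum Q A \<le> sum Q' A" "sum Q' Hc + sum Q' A \<le> 1"
          "sum P A = \<theta> + (1-\<theta>)/2" "sum P H1 = \<theta> + (1-\<theta>)/m" "sum P A - D/3 \<le> sum Q A"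
          "sum P H1 - D/3 \<le> sum Q H1" "plu_score m Q' 1 = sum Q' H1" "plu_score m Q' c = sum Q' Hc"
          by blast+
        obtain x where x: "x = (1-\<theta>)/real m" by blast
        have Dx: "D = \<theta> + x - (1-\<theta>)/2" unfolding D_def x by simp
        have "sum P H1 = \<theta> + x" using fin(5) x by simp
        then have s1: "\<theta> + x - D/3 \<le> sum Q' H1" using fin(1,7) by linarith
        have s2: "sum Q' Hc \<le> 1 - sum Q A" using fin(2,3) by linarith
        have s3: "sum Q' Hc \<le> 1 - (\<theta> + (1-\<theta>)/2) + D/3" using s2 fin(4,6) by linarith
        have s4: "sum Q' H1 \<le> sum Q' Hc" using cge fin(8,9) by simp
        have s5: "\<theta> + x - D/3 \<le> 1 - (\<theta> + (1-\<theta>)/2) + D/3" using s1 s3 s4 by linarith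
        have s6: "1 - (\<theta> + (1-\<theta>)/2) = (1-\<theta>)/2" by (simp add: field_simps)
        have "D - D/3 \<le> D/3" using s5 unfolding s6 Dx by linarith
        then show False using Dpos by linarith
      qed
    qed
  qed
  show ?thesis using part1 part2 part3 unfolding f_def P_def by blast
qed

end
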